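(* Let $\mathbb{K}$ be a Hausdorff non-discrete topological field, let $E$ and $F$ be (Hausdorff) topological $\mathbb{K}$-vector spaces, $N$ a closed vector subspace of $E$, $E_1:=E/N$ and $q\colon E\to E_1$ the quotient map. Let $k\in\mathbb{N}_0\cup\{\infty\}$, let $f_1\colon U_1\to F$ be a map defined on an open subset $U_1\subseteq E_1$, and let $U\subseteq E$ be an open subset with $q(U)=U_1$. Then $f_1$ is of class $C^k$ if and only if $f:=f_1\circ q|_U\colon U\to F$ is of class $C^k$.
   Context: All topological vector spaces are Hausdorff; products carry the product topology. For open $V$ in a topological $\mathbb{K}$-vector space $X$, $V^{[1]}:=\{(x,v,t)\in V\times X\times\mathbb{K}:x+tv\in V\}$. A map $g\colon V\to Y$ into a topological $\mathbb{K}$-vector space is $C^0$ if continuous, and $C^1$ if continuous and there is a continuous $g^{[1]}\colon V^{[1]}\to Y$ with $g(x+tv)-g(x)=t\,g^{[1]}(x,v,t)$ for all $(x,v,t)\in V^{[1]}$; recursively $V^{[k+1]}=(V^{[k]})^{[1]}$, $g$ is $C^{k+1}$ if $C^k$ and $g^{[k]}$ is $C^1$, $g^{[k+1]}=(g^{[k]})^{[1]}$; $C^\infty$ = $C^k$ for all $k\in\mathbb{N}_0$. *)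

theory Defs
  imports "HOL-Analysis.Analysis" "HOL-Library.Extended_Nat"
begin

text \<open>The topological field K is a type of class field + t2_space (Hausdorff);
  field operations continuous (inversion on K without 0).\<close>
definition top_field :: "'k::{field,topological_space} itself \<Rightarrow> bool" where
  "top_field _ \<longleftrightarrow>
     continuous_on UNIV (\<lambda>p::'k\<times>'k. fst p + snd p) \<and>
     continuous_on UNIV (\<lambda>p::'k\<times>'k. fst p * snd p) \<and>
     continuous_on UNIV (\<lambda>x::'k. - x) \<and>
     continuous_on (- {0}) (\<lambda>x::'k. inverse x)"

definition non_discrete :: "'k::topological_space itself \<Rightarrow> bool" where
  "non_discrete _ \<longleftrightarrow> \<not> (\<forall>S::'k set. open S)"

definition tvs :: "('k::{field,topological_space} \<Rightarrow> 'e::{ab_group_add,topological_space} \<Rightarrow> 'e) \<Rightarrow> bool" where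
  "tvs sc \<longleftrightarrow> vector_space sc \<and>
     continuous_on UNIV (\<lambda>p::'e\<times>'e. fst p + snd p) \<and>
     continuous_on UNIV (\<lambda>p::'k\<times>'e. sc (fst p) (snd p))"

definition quot_top :: "'a topology \<Rightarrow> ('a \<Rightarrow> 'b) \<Rightarrow> 'b topology" where
  "quot_top T q = topology (\<lambda>U. U \<subseteq> q ` topspace T \<and> openin T (topspace T \<inter> q -` U))"

definition coset_of :: "'e::ab_group_add set \<Rightarrow> 'e \<Rightarrow> 'e set" where
  "coset_of N x = {x + n | n. n \<in> N}"

definition quot_add :: "'e::ab_group_add set \<Rightarrow> 'e set \<Rightarrow> 'e set \<Rightarrow> 'e set" where
  "quot_add N A B = coset_of N ((SOME a. a \<in> A) + (SOME b. b \<in> B))"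

definition quot_scl :: "('k \<Rightarrow> 'e::ab_group_add \<Rightarrow> 'e) \<Rightarrow> 'e set \<Rightarrow> 'k \<Rightarrow> 'e set \<Rightarrow> 'e set" where
  "quot_scl sc N t A = coset_of N (sc t (SOME a. a \<in> A))"

definition quot_space_top :: "'e::{ab_group_add,topological_space} set \<Rightarrow> 'e set topology" where
  "quot_space_top N = quot_top (euclidean :: 'e topology) (coset_of N)"

text \<open>Elements of all the iterated spaces are encoded in one datatype:
  level 0 elements are Base x, level j+1 elements are Tri a b t (for (a,b,t)).\<close>
datatype ('x,'k) itr = Base 'x | Tri "('x,'k) itr" "('x,'k) itr" 'k

primrec lvl_top :: "'x topology \<Rightarrow> nat \<Rightarrow> ('x,'k::topological_space) itr topology" where
  "lvl_top T 0 = quot_top T Base"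
| "lvl_top T (Suc j) =
     quot_top (prod_topology (lvl_top T j) (prod_topology (lvl_top T j) (euclidean :: 'k topology)))
              (\<lambda>(a,b,t). Tri a b t)"

fun itr_add :: "('x \<Rightarrow> 'x \<Rightarrow> 'x) \<Rightarrow> ('x,'k::plus) itr \<Rightarrow> ('x,'k) itr \<Rightarrow> ('x,'k) itr" where
  "itr_add ad (Base x) (Base y) = Base (ad x y)"
| "itr_add ad (Tri a b t) (Tri a' b' s) = Tri (itr_add ad a a') (itr_add ad b b') (t + s)"
| "itr_add ad _ _ = undefined"

primrec itr_scl :: "('k \<Rightarrow> 'x \<Rightarrow> 'x) \<Rightarrow> 'k::times \<Rightarrow> ('x,'k) itr \<Rightarrow> ('x,'k) itr" where
  "itr_scl sc s (Base x) = Base (sc s x)"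
| "itr_scl sc s (Tri a b t) = Tri (itr_scl sc s a) (itr_scl sc s b) (s * t)"

definition dq_dom :: "'x topology \<Rightarrow> ('x \<Rightarrow> 'x \<Rightarrow> 'x) \<Rightarrow> ('k::{times,plus,topological_space} \<Rightarrow> 'x \<Rightarrow> 'x)
    \<Rightarrow> nat \<Rightarrow> ('x,'k) itr set \<Rightarrow> ('x,'k) itr set" where
  "dq_dom T ad sc j W = {Tri a b t | a b t. a \<in> W \<and> b \<in> topspace (lvl_top T j) \<and>
                                           itr_add ad a (itr_scl sc t b) \<in> W}"

primrec iter_dom :: "'x topology \<Rightarrow> ('x \<Rightarrow> 'x \<Rightarrow> 'x) \<Rightarrow> ('k::{times,plus,topological_space} \<Rightarrow> 'x \<Rightarrow> 'x)
    \<Rightarrow> 'x set \<Rightarrow> nat \<Rightarrow> ('x,'k) itr set" where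
  "iter_dom T ad sc V 0 = Base ` V"
| "iter_dom T ad sc V (Suc j) = dq_dom T ad sc j (iter_dom T ad sc V j)"

text \<open>The domain space X is given by its topology T (carrier topspace T), addition ad and scalar
  multiplication sc; the target Y is a type with scalar multiplication scY.\<close>
definition Ck_nat :: "'x topology \<Rightarrow> ('x \<Rightarrow> 'x \<Rightarrow> 'x) \<Rightarrow> ('k::{field,topological_space} \<Rightarrow> 'x \<Rightarrow> 'x)
    \<Rightarrow> ('k \<Rightarrow> 'y::{ab_group_add,topological_space} \<Rightarrow> 'y) \<Rightarrow> 'x set \<Rightarrow> ('x \<Rightarrow> 'y) \<Rightarrow> nat \<Rightarrow> bool" where
  "Ck_nat T ad sc scY V g k \<longleftrightarrow>
    (\<exists>h :: nat \<Rightarrow> ('x,'k) itr \<Rightarrow> 'y.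
       (\<forall>x\<in>V. h 0 (Base x) = g x) \<and>
       (\<forall>j\<le>k. continuous_map (subtopology (lvl_top T j) (iter_dom T ad sc V j)) euclidean (h j)) \<and>
       (\<forall>j<k. \<forall>a b t. Tri a b t \<in> iter_dom T ad sc V (Suc j) \<longrightarrow>
           h j (itr_add ad a (itr_scl sc t b)) - h j a = scY t (h (Suc j) (Tri a b t))))"

definition Ck :: "'x topology \<Rightarrow> ('x \<Rightarrow> 'x \<Rightarrow> 'x) \<Rightarrow> ('k::{field,topological_space} \<Rightarrow> 'x \<Rightarrow> 'x)
    \<Rightarrow> ('k \<Rightarrow> 'y::{ab_group_add,topological_space} \<Rightarrow> 'y) \<Rightarrow> 'x set \<Rightarrow> ('x \<Rightarrow> 'y) \<Rightarrow> enat \<Rightarrow> bool" where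
  "Ck T ad sc scY V g k \<longleftrightarrow> (\<forall>n. enat n \<le> k \<longrightarrow> Ck_nat T ad sc scY V g n)"

end

theory Submission
  imports Defs
begin

lemma istop_quot_top:
  "istopology (\<lambda>U. U \<subseteq> q ` topspace T \<and> openin T (topspace T \<inter> q -` U))"
proof -
  have 1: "S \<inter> U \<subseteq> q ` topspace T \<and> openin T (topspace T \<inter> q -` (S \<inter> U))"
    if "S \<subseteq> q ` topspace T \<and> openin T (topspace T \<inter> q -` S)"
       "U \<subseteq> q ` topspace T \<and> openin T (topspace T \<inter> q -` U)" for S U
  proof -
    have "topspace T \<inter> q -` (S \<inter> U) = (topspace T \<inter> q -` S) \<inter> (topspace T \<inter> q -` U)" by auto
    then show ?thesis using that openin_Int by auto
  qed
  have 2: "\<Union>K \<subseteq> q ` topspace T \<and> openin T (topspace T \<inter> q -` \<Union>K)"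
    if K: "\<forall>U\<in>K. U \<subseteq> q ` topspace T \<and> openin T (topspace T \<inter> q -` U)" for K
  proof -
    have "topspace T \<inter> q -` \<Union>K = \<Union>((\<lambda>U. topspace T \<inter> q -` U) ` K)" by auto
    moreover have "openin T (\<Union>((\<lambda>U. topspace T \<inter> q -` U) ` K))"
      using K by (intro openin_Union) auto
    ultimately show ?thesis using K by auto
  qed
  show ?thesis unfolding istopology_def using 1 2 by blast
qed

lemma openin_quot_top:
  "openin (quot_top T q) U \<longleftrightarrow> U \<subseteq> q ` topspace T \<and> openin T (topspace T \<inter> q -` U)"
  unfolding quot_top_def using istop_quot_top topology_inverse' by metis

lemma topspace_quot_top [simp]: "topspace (quot_top T q) = q ` topspace T"
proof -
  have "topspace T \<inter> q -` q ` topspace T = topspace T" by auto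
  then have "openin (quot_top T q) (q ` topspace T)"
    unfolding openin_quot_top by auto
  moreover have "U \<subseteq> q ` topspace T" if "openin (quot_top T q) U" for U
    using that unfolding openin_quot_top by auto
  ultimately show ?thesis
    using openin_subset[of "quot_top T q"] openin_topspace[of "quot_top T q"]
    by (meson subset_antisym)
qed

lemma quotient_map_quot_top: "quotient_map T (quot_top T q) q"
  unfolding quotient_map_def openin_quot_top topspace_quot_top
  by (auto simp: Int_def vimage_def Collect_conj_eq[symmetric] intro!: arg_cong[where f="openin T"])

lemma open_map_prod:
  assumes "open_map X X' f" "open_map Y Y' g"
  shows "open_map (prod_topology X Y) (prod_topology X' Y') (\<lambda>(x,y). (f x, g y))"
  unfolding open_map_def
proof (intro allI impI)
  fix S assume S: "openin (prod_topology X Y) S"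
  show "openin (prod_topology X' Y') ((\<lambda>(x,y). (f x, g y)) ` S)"
    unfolding openin_prod_topology_alt
  proof (intro allI impI)
    fix u v assume "(u, v) \<in> (\<lambda>(x,y). (f x, g y)) ` S"
    then obtain p where p: "p \<in> S" "(u, v) = (\<lambda>(x,y). (f x, g y)) p" by (rule imageE)
    obtain x y where "p = (x,y)" by (cases p)
    then have xy: "(x,y) \<in> S" "u = f x" "v = g y" using p by simp_all
    obtain U V where UV: "openin X U" "openin Y V" "x \<in> U" "y \<in> V" "U \<times> V \<subseteq> S"
      using S[unfolded openin_prod_topology_alt, rule_format, OF xy(1)] by blast
    show "\<exists>U V. openin X' U \<and> openin Y' V \<and> u \<in> U \<and> v \<in> V \<and>
                U \<times> V \<subseteq> (\<lambda>(x,y). (f x, g y)) ` S"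
    proof (intro exI conjI)
      show "openin X' (f ` U)" "openin Y' (g ` V)" using UV assms by (auto simp: open_map_def)
      show "u \<in> f ` U" "v \<in> g ` V" using UV xy by auto
      show "f ` U \<times> g ` V \<subseteq> (\<lambda>(x,y). (f x, g y)) ` S"
        using image_mono[OF UV(5), of "\<lambda>(x,y). (f x, g y)"] by (simp add: image_paired_Times)
    qed
  qed
qed

lemma open_map_ident: "open_map X X (\<lambda>x. x)"
  by (simp add: open_map_def)

lemma quot_prod:
  assumes "quotient_map X X' f" "open_map X X' f" "quotient_map Y Y' g" "open_map Y Y' g"
  shows "quotient_map (prod_topology X Y) (prod_topology X' Y') (\<lambda>(x,y). (f x, g y))"
    and "open_map (prod_topology X Y) (prod_topology X' Y') (\<lambda>(x,y). (f x, g y))"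
proof -
  show om: "open_map (prod_topology X Y) (prod_topology X' Y') (\<lambda>(x,y). (f x, g y))"
    using assms open_map_prod by blast
  show "quotient_map (prod_topology X Y) (prod_topology X' Y') (\<lambda>(x,y). (f x, g y))"
  proof (rule continuous_open_imp_quotient_map[OF _ om])
    show "continuous_map (prod_topology X Y) (prod_topology X' Y') (\<lambda>(x,y). (f x, g y))"
      using assms by (simp add: continuous_map_prod_top quotient_imp_continuous_map)
    show "(\<lambda>(x,y). (f x, g y)) ` topspace (prod_topology X Y) = topspace (prod_topology X' Y')"
      using assms by (simp add: image_paired_Times quotient_imp_surjective_map)
  qed
qed

lemma quot_ident: "quotient_map X X (\<lambda>x. x)"
proof -
  have "\<And>U. U \<subseteq> topspace X \<Longrightarrow> {x \<in> topspace X. x \<in> U} = U" by auto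
  then show ?thesis unfolding quotient_map_def by auto
qed

lemma inj_quot_open: "inj q \<Longrightarrow> open_map T (quot_top T q) q"
  using injective_quotient_map[of q T "quot_top T q"] quotient_map_quot_top
  by (metis inj_on_subset subset_UNIV)

lemma lvl0_quot: "quotient_map T (lvl_top T 0) Base"
  by (simp add: quotient_map_quot_top)

lemma lvl0_open: "open_map T (lvl_top T 0) Base"
  by (simp add: inj_quot_open inj_def)

lemma lvlS_quot: "quotient_map (prod_topology (lvl_top T j) (prod_topology (lvl_top T j) euclidean))
   (lvl_top T (Suc j)) (\<lambda>(a,b,t). Tri a b t)"
  by (simp add: quotient_map_quot_top)

lemma lvlS_open: "open_map (prod_topology (lvl_top T j) (prod_topology (lvl_top T j) euclidean))
   (lvl_top T (Suc j)) (\<lambda>(a,b,t). Tri a b t)"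
  by (simp only: lvl_top.simps, rule inj_quot_open) (auto simp: inj_def)

lemma topspace_lvl0: "topspace (lvl_top T 0) = Base ` topspace T"
  by simp

lemma topspace_lvlS: "topspace (lvl_top T (Suc j)) =
   (\<lambda>(a,b,t). Tri a b t) ` (topspace (lvl_top T j) \<times> topspace (lvl_top T j) \<times> UNIV)"
  by simp

lemma img_pre: "U \<subseteq> f ` A \<Longrightarrow> U = f ` (A \<inter> f -` U)"
  by blast

lemma mem_lvlS: "x \<in> topspace (lvl_top T (Suc j)) \<longleftrightarrow>
   (\<exists>a b t. x = Tri a b t \<and> a \<in> topspace (lvl_top T j) \<and> b \<in> topspace (lvl_top T j))"
  unfolding topspace_lvlS by force

lemma cm_app:
  assumes "continuous_map (prod_topology A B) C (\<lambda>(x,y). g x y)"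
    "continuous_map Z A f1" "continuous_map Z B f2"
  shows "continuous_map Z C (\<lambda>z. g (f1 z) (f2 z))"
  using continuous_map_compose[OF continuous_map_pairedI[OF assms(2,3)] assms(1)]
  by (simp add: o_def)

lemma cm_fst: "continuous_map Z (prod_topology X Y) f \<Longrightarrow> continuous_map Z X (\<lambda>z. fst (f z))"
  using continuous_map_fst_of by (simp add: o_def)

lemma cm_snd: "continuous_map Z (prod_topology X Y) f \<Longrightarrow> continuous_map Z Y (\<lambda>z. snd (f z))"
  using continuous_map_snd_of by (simp add: o_def)

lemma cm_idl: "continuous_map X X (\<lambda>x. x)"
  by simp

lemma lvl_add_cont:
  assumes base: "continuous_map (prod_topology T T) T (\<lambda>(x,y). ad x y)"
    and kadd: "continuous_map (prod_topology euclidean euclidean) (euclidean::'k::{plus,topological_space} topology) (\<lambda>(x,y). x + y)"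
  shows "continuous_map (prod_topology (lvl_top T j) (lvl_top T j)) (lvl_top T j)
           (\<lambda>(a,b). itr_add ad a (b::('x,'k) itr))"
proof (induction j)
  case 0
  have q: "quotient_map (prod_topology T T) (prod_topology (lvl_top T 0) (lvl_top T 0)) (\<lambda>(x,y). (Base x, Base y))"
    using quot_prod(1)[OF lvl0_quot lvl0_open lvl0_quot lvl0_open] .
  have "(\<lambda>(a,b). itr_add ad a (b::('x,'k) itr)) \<circ> (\<lambda>(x,y). (Base x, Base y)) = Base \<circ> (\<lambda>(x,y). ad x y)"
    by auto
  then have "continuous_map (prod_topology T T) (lvl_top T 0) ((\<lambda>(a,b). itr_add ad a (b::('x,'k) itr)) \<circ> (\<lambda>(x,y). (Base x, Base y)))"
    using continuous_map_compose[OF base quotient_imp_continuous_map[OF lvl0_quot]] by simp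
  then show ?case using continuous_compose_quotient_map[OF q] by blast
next
  case (Suc j)
  let ?L = "lvl_top T j :: ('x,'k) itr topology"
  let ?Y = "prod_topology ?L (prod_topology ?L (euclidean::'k topology))"
  let ?tri = "\<lambda>(a,b,t). Tri a b (t::'k)"
  have q: "quotient_map (prod_topology ?Y ?Y) (prod_topology (lvl_top T (Suc j)) (lvl_top T (Suc j)))
     (\<lambda>(u,v). (?tri u, ?tri v))"
    using quot_prod(1)[OF lvlS_quot lvlS_open lvlS_quot lvlS_open] .
  define G where "G = (\<lambda>p::(('x,'k) itr \<times> ('x,'k) itr \<times> 'k) \<times> (('x,'k) itr \<times> ('x,'k) itr \<times> 'k).
     (itr_add ad (fst (fst p)) (fst (snd p)), itr_add ad (fst (snd (fst p))) (fst (snd (snd p))),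
      snd (snd (fst p)) + snd (snd (snd p))))"
  have p1: "continuous_map (prod_topology ?Y ?Y) ?Y (\<lambda>p. fst p)" "continuous_map (prod_topology ?Y ?Y) ?Y (\<lambda>p. snd p)"
    by (rule cm_fst cm_snd, rule cm_idl)+
  have G: "continuous_map (prod_topology ?Y ?Y) ?Y G"
    unfolding G_def
    apply (intro continuous_map_pairedI)
      apply (rule cm_app[OF Suc.IH])
       apply (rule cm_fst, rule p1)
      apply (rule cm_fst, rule p1)
     apply (rule cm_app[OF Suc.IH])
      apply (rule cm_fst, rule cm_snd, rule p1)
     apply (rule cm_fst, rule cm_snd, rule p1)
    apply (rule cm_app[OF kadd])
     apply (rule cm_snd, rule cm_snd, rule p1)
    apply (rule cm_snd, rule cm_snd, rule p1)
    done
  have "(\<lambda>(a,b). itr_add ad a (b::('x,'k) itr)) \<circ> (\<lambda>(u,v). (?tri u, ?tri v)) = ?tri \<circ> G"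
    by (auto simp: G_def fun_eq_iff)
  then have "continuous_map (prod_topology ?Y ?Y) (lvl_top T (Suc j))
     ((\<lambda>(a,b). itr_add ad a (b::('x,'k) itr)) \<circ> (\<lambda>(u,v). (?tri u, ?tri v)))"
    using continuous_map_compose[OF G quotient_imp_continuous_map[OF lvlS_quot]] by simp
  then show ?case using continuous_compose_quotient_map[OF q] by blast
qed

lemma lvl_scl_cont:
  assumes base: "continuous_map (prod_topology euclidean T) T (\<lambda>(s,x). sc s x)"
    and kmul: "continuous_map (prod_topology euclidean euclidean) (euclidean::'k::{times,topological_space} topology) (\<lambda>(x,y). x * y)"
  shows "continuous_map (prod_topology euclidean (lvl_top T j)) (lvl_top T j)
           (\<lambda>(s,a). itr_scl sc s (a::('x,'k) itr))"
proof (induction j)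
  case 0
  have q: "quotient_map (prod_topology euclidean T) (prod_topology euclidean (lvl_top T 0)) (\<lambda>(s,x). (s, Base x))"
    using quot_prod(1)[OF quot_ident open_map_ident lvl0_quot lvl0_open] .
  have "(\<lambda>(s,a). itr_scl sc s (a::('x,'k) itr)) \<circ> (\<lambda>(s,x). (s, Base x)) = Base \<circ> (\<lambda>(s,x). sc s x)"
    by auto
  then have "continuous_map (prod_topology euclidean T) (lvl_top T 0) ((\<lambda>(s,a). itr_scl sc s (a::('x,'k) itr)) \<circ> (\<lambda>(s,x). (s, Base x)))"
    using continuous_map_compose[OF base quotient_imp_continuous_map[OF lvl0_quot]] by simp
  then show ?case using continuous_compose_quotient_map[OF q] by blast
next
  case (Suc j)
  let ?L = "lvl_top T j :: ('x,'k) itr topology"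
  let ?Y = "prod_topology ?L (prod_topology ?L (euclidean::'k topology))"
  let ?Z = "prod_topology (euclidean::'k topology) ?Y"
  let ?tri = "\<lambda>(a,b,t). Tri a b (t::'k)"
  have q: "quotient_map ?Z (prod_topology euclidean (lvl_top T (Suc j)))
     (\<lambda>(s,u). (s, ?tri u))"
    using quot_prod(1)[OF quot_ident open_map_ident lvlS_quot lvlS_open] .
  define G where "G = (\<lambda>p::'k \<times> (('x,'k) itr \<times> ('x,'k) itr \<times> 'k).
     (itr_scl sc (fst p) (fst (snd p)), itr_scl sc (fst p) (fst (snd (snd p))),
      fst p * snd (snd (snd p))))"
  have p1: "continuous_map ?Z euclidean (\<lambda>p. fst p)" "continuous_map ?Z ?Y (\<lambda>p. snd p)"
    by (rule cm_fst cm_snd, rule cm_idl)+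
  have G: "continuous_map ?Z ?Y G"
    unfolding G_def
    apply (intro continuous_map_pairedI)
      apply (rule cm_app[OF Suc.IH])
       apply (rule p1)
      apply (rule cm_fst, rule p1)
     apply (rule cm_app[OF Suc.IH])
      apply (rule p1)
     apply (rule cm_fst, rule cm_snd, rule p1)
    apply (rule cm_app[OF kmul])
     apply (rule p1)
    apply (rule cm_snd, rule cm_snd, rule p1)
    done
  have "(\<lambda>(s,a). itr_scl sc s (a::('x,'k) itr)) \<circ> (\<lambda>(s,u). (s, ?tri u)) = ?tri \<circ> G"
    by (auto simp: G_def fun_eq_iff)
  then have "continuous_map ?Z (lvl_top T (Suc j))
     ((\<lambda>(s,a). itr_scl sc s (a::('x,'k) itr)) \<circ> (\<lambda>(s,u). (s, ?tri u)))"
    using continuous_map_compose[OF G quotient_imp_continuous_map[OF lvlS_quot]] by simp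
  then show ?case using continuous_compose_quotient_map[OF q] by blast
qed

lemma lvl_phi_cont:
  assumes "continuous_map (prod_topology T T) T (\<lambda>(x,y). ad x y)"
    and "continuous_map (prod_topology euclidean euclidean) (euclidean::'k::{plus,times,topological_space} topology) (\<lambda>(x,y). x + y)"
    and "continuous_map (prod_topology euclidean T) T (\<lambda>(s,x). sc s x)"
    and "continuous_map (prod_topology euclidean euclidean) (euclidean::'k topology) (\<lambda>(x,y). x * y)"
  shows "continuous_map (prod_topology (lvl_top T j) (prod_topology (lvl_top T j) (euclidean::'k topology))) (lvl_top T j)
           (\<lambda>p. itr_add ad (fst p) (itr_scl sc (snd (snd p)) (fst (snd p))))"
  apply (rule cm_app[OF lvl_add_cont[OF assms(1,2)]])
   apply (rule cm_fst, rule cm_idl)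
  apply (rule cm_app[OF lvl_scl_cont[OF assms(3,4)]])
   apply (rule cm_snd, rule cm_snd, rule cm_idl)
  apply (rule cm_fst, rule cm_snd, rule cm_idl)
  done

lemma iter_dom_sub:
  "V \<subseteq> topspace T \<Longrightarrow> iter_dom T ad sc V j \<subseteq> topspace (lvl_top T j)"
proof (induction j)
  case 0 then show ?case by auto
next
  case (Suc j)
  have "Tri a b t \<in> topspace (lvl_top T (Suc j))"
    if "a \<in> topspace (lvl_top T j)" "b \<in> topspace (lvl_top T j)" for a b t
    unfolding topspace_lvlS by (rule image_eqI[where x="(a,b,t)"]) (use that in auto)
  then show ?case using Suc
    by (auto simp: dq_dom_def simp del: lvl_top.simps)
qed

lemma iter_dom_open:
  assumes "continuous_map (prod_topology T T) T (\<lambda>(x,y). ad x y)"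
    and "continuous_map (prod_topology euclidean euclidean) (euclidean::'k::{plus,times,topological_space} topology) (\<lambda>(x,y). x + y)"
    and "continuous_map (prod_topology euclidean T) T (\<lambda>(s,x). sc s x)"
    and "continuous_map (prod_topology euclidean euclidean) (euclidean::'k topology) (\<lambda>(x,y). x * y)"
    and V: "openin T V"
  shows "openin (lvl_top T j) (iter_dom T ad sc V j :: ('x,'k) itr set)"
proof (induction j)
  case 0
  have "topspace T \<inter> Base -` (Base ` V :: ('x,'k) itr set) = V" using openin_subset[OF V] by auto
  then show ?case using V by (simp add: openin_quot_top openin_subset image_mono)
next
  case (Suc j)
  let ?L = "lvl_top T j :: ('x,'k) itr topology"
  let ?Y = "prod_topology ?L (prod_topology ?L (euclidean::'k topology))"
  let ?tri = "\<lambda>(a,b,t). Tri a b (t::'k)"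
  let ?D = "iter_dom T ad sc V j :: ('x,'k) itr set"
  let ?phi = "\<lambda>p. itr_add ad (fst p) (itr_scl sc (snd (snd p)) (fst (snd p)))"
  have sub: "?D \<subseteq> topspace ?L" using iter_dom_sub openin_subset[OF V] by blast
  have eq: "iter_dom T ad sc V (Suc j) = ?tri ` ({p \<in> topspace ?Y. fst p \<in> ?D} \<inter> {p \<in> topspace ?Y. ?phi p \<in> ?D})"
  proof (intro set_eqI iffI)
    fix x assume "x \<in> iter_dom T ad sc V (Suc j)"
    then obtain a b t where "x = Tri a b t" "a \<in> ?D" "b \<in> topspace ?L" "?phi (a,b,t) \<in> ?D"
      by (auto simp: dq_dom_def)
    then show "x \<in> ?tri ` ({p \<in> topspace ?Y. fst p \<in> ?D} \<inter> {p \<in> topspace ?Y. ?phi p \<in> ?D})"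
      using sub by (intro image_eqI[where x="(a,b,t)"]) auto
  next
    fix x assume "x \<in> ?tri ` ({p \<in> topspace ?Y. fst p \<in> ?D} \<inter> {p \<in> topspace ?Y. ?phi p \<in> ?D})"
    then show "x \<in> iter_dom T ad sc V (Suc j)"
      by (auto simp: dq_dom_def)
  qed
  have "openin ?Y ({p \<in> topspace ?Y. fst p \<in> ?D} \<inter> {p \<in> topspace ?Y. ?phi p \<in> ?D})"
    apply (rule openin_Int)
     apply (rule openin_continuous_map_preimage[OF _ Suc.IH])
     apply (rule cm_fst, rule cm_idl)
    apply (rule openin_continuous_map_preimage[OF lvl_phi_cont[OF assms(1-4)] Suc.IH])
    done
  then show ?case unfolding eq using lvlS_open unfolding open_map_def by blast
qed
lemma nd_at:
  assumes tf: "top_field TYPE('k::{field,t2_space})" and nd: "non_discrete TYPE('k)"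
  shows "at (0::'k) \<noteq> bot"
proof
  assume "at (0::'k) = bot"
  then have o: "open {0::'k}" by (simp add: at_eq_bot_iff)
  have kadd: "continuous_map (prod_topology euclidean euclidean) (euclidean::'k topology) (\<lambda>(x,y). x + y)"
    using tf unfolding top_field_def by (simp add: case_prod_unfold)
  have sing: "open {c}" for c :: 'k
  proof -
    have "continuous_map euclidean euclidean (\<lambda>z::'k. z + (-c))" by (rule cm_app[OF kadd cm_idl], simp)
    then have "open ((\<lambda>z. z + - c) -` {0})" using o open_vimage by auto
    moreover have "(\<lambda>z. z + - c) -` {0} = {c}" by (auto simp: add_eq_0_iff)
    ultimately show ?thesis by simp
  qed
  have "open S" for S :: "'k set"
  proof -
    have "S = (\<Union>c\<in>S. {c})" by auto
    then show ?thesis using sing by (metis open_UN)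
  qed
  then show False using nd unfolding non_discrete_def by blast
qed


primrec qm :: "'e set \<Rightarrow> ('e::ab_group_add,'k) itr \<Rightarrow> ('e set,'k) itr" where
  "qm N (Base x) = Base (coset_of N x)"
| "qm N (Tri a b t) = Tri (qm N a) (qm N b) t"

context
  fixes sE :: "'k::{field,t2_space} \<Rightarrow> 'e::{ab_group_add,t2_space} \<Rightarrow> 'e" and N :: "'e set"
  assumes tvsE: "tvs sE" and subN: "module.subspace sE N"
begin

lemma VS: "vector_space sE" using tvsE tvs_def by blast

interpretation E: vector_space sE by (rule VS)

lemma N0: "0 \<in> N" and Nadd: "x \<in> N \<Longrightarrow> y \<in> N \<Longrightarrow> x + y \<in> N" and Nscl: "x \<in> N \<Longrightarrow> sE c x \<in> N"
  using subN by (auto simp: E.subspace_def)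

lemma Nneg: "x \<in> N \<Longrightarrow> - x \<in> N"
  using Nscl[of x "-1"] by (simp add: E.scale_minus_left)

lemma Ndiff: "x \<in> N \<Longrightarrow> y \<in> N \<Longrightarrow> x - y \<in> N"
  using Nadd Nneg by (metis diff_conv_add_uminus)

lemma cos_eq: "coset_of N x = coset_of N y \<longleftrightarrow> x - y \<in> N"
proof
  assume eq: "coset_of N x = coset_of N y"
  have "y \<in> coset_of N y" unfolding coset_of_def using N0 by force
  then have "y \<in> coset_of N x" using eq by simp
  then obtain n where "n \<in> N" "y = x + n" unfolding coset_of_def by blast
  then show "x - y \<in> N" using Nneg by simp
next
  assume d: "x - y \<in> N"
  show "coset_of N x = coset_of N y"
  proof (intro set_eqI iffI)
    fix z assume "z \<in> coset_of N x"
    then obtain n where "n \<in> N" "z = x + n" unfolding coset_of_def by auto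
    then have "z = y + ((x - y) + n)" "(x - y) + n \<in> N" using d Nadd by (simp add: algebra_simps, blast)
    then show "z \<in> coset_of N y" unfolding coset_of_def by blast
  next
    fix z assume "z \<in> coset_of N y"
    then obtain n where "n \<in> N" "z = y + n" unfolding coset_of_def by auto
    then have "z = x + (n - (x - y))" "n - (x - y) \<in> N" using d Ndiff by (simp add: algebra_simps, blast)
    then show "z \<in> coset_of N x" unfolding coset_of_def by blast
  qed
qed

lemma cos_self: "x \<in> coset_of N x"
  unfolding coset_of_def using N0 by force

lemma cos_mem: "a \<in> coset_of N x \<Longrightarrow> coset_of N a = coset_of N x"
  unfolding cos_eq by (auto simp: coset_of_def)

lemma some_cos: "coset_of N (SOME a. a \<in> coset_of N x) = coset_of N x"
  by (rule cos_mem, rule someI, rule cos_self)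

lemma qadd: "quot_add N (coset_of N x) (coset_of N y) = coset_of N (x + y)"
proof -
  let ?a = "SOME a. a \<in> coset_of N x" and ?b = "SOME a. a \<in> coset_of N y"
  have "?a - x \<in> N" "?b - y \<in> N" using some_cos cos_eq by blast+
  then have "(?a + ?b) - (x + y) \<in> N" using Nadd by (metis add_diff_add)
  then show ?thesis unfolding quot_add_def cos_eq .
qed

lemma qscl: "quot_scl sE N s (coset_of N x) = coset_of N (sE s x)"
proof -
  let ?a = "SOME a. a \<in> coset_of N x"
  have "?a - x \<in> N" using some_cos cos_eq by blast
  then have "sE s ?a - sE s x \<in> N" using Nscl by (metis E.scale_right_diff_distrib)
  then show ?thesis unfolding quot_scl_def cos_eq .
qed

lemma addc: "continuous_map (prod_topology euclidean euclidean) euclidean (\<lambda>(x,y). x + (y::'e))"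
  using tvsE unfolding tvs_def by (simp add: case_prod_unfold)

lemma sclc: "continuous_map (prod_topology euclidean euclidean) euclidean (\<lambda>(s,x). sE s x)"
  using tvsE unfolding tvs_def by (simp add: case_prod_unfold)

lemma transl_open: "open V \<Longrightarrow> open ((\<lambda>z. z + c) -` (V::'e set))"
proof -
  assume V: "open V"
  have "continuous_map euclidean euclidean (\<lambda>z::'e. z + c)"
    by (rule cm_app[OF addc cm_idl], simp)
  then show ?thesis using V open_vimage by auto
qed

lemma Q_quot: "quotient_map euclidean (quot_space_top N) (coset_of N)"
  unfolding quot_space_top_def by (rule quotient_map_quot_top)

lemma Q_open: "open_map euclidean (quot_space_top N) (coset_of N)"
  unfolding open_map_def
proof (intro allI impI)
  fix V :: "'e set" assume "openin euclidean V"
  then have V: "open V" by simp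
  have eq: "coset_of N -` coset_of N ` V = (\<Union>n\<in>N. (\<lambda>z. z + (- n)) -` V)"
  proof (intro set_eqI iffI)
    fix y assume "y \<in> coset_of N -` coset_of N ` V"
    then obtain x where "x \<in> V" "y - x \<in> N" using cos_eq by auto
    then show "y \<in> (\<Union>n\<in>N. (\<lambda>z. z + (- n)) -` V)" by (auto intro!: bexI[of _ "y - x"])
  next
    fix y assume "y \<in> (\<Union>n\<in>N. (\<lambda>z. z + (- n)) -` V)"
    then obtain n where "n \<in> N" "y - n \<in> V" by auto
    moreover have "y - (y - n) = n" by simp
    ultimately show "y \<in> coset_of N -` coset_of N ` V" using cos_eq
      by (metis image_eqI vimageI)
  qed
  have "open (coset_of N -` coset_of N ` V)" unfolding eq using transl_open[OF V] by blast
  then show "openin (quot_space_top N) (coset_of N ` V)"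
    unfolding quot_space_top_def openin_quot_top by auto
qed

lemma qm_lvl:
  "continuous_map (lvl_top (euclidean::'e topology) j) (lvl_top (quot_space_top N) j) (qm N :: ('e,'k) itr \<Rightarrow> _)
   \<and> open_map (lvl_top (euclidean::'e topology) j) (lvl_top (quot_space_top N) j) (qm N :: ('e,'k) itr \<Rightarrow> _)
   \<and> qm N ` topspace (lvl_top (euclidean::'e topology) j :: ('e,'k) itr topology) = topspace (lvl_top (quot_space_top N) j)"
proof (induction j)
  case 0
  have e: "(qm N :: ('e,'k) itr \<Rightarrow> _) \<circ> Base = Base \<circ> coset_of N" by auto
  have c: "continuous_map (lvl_top (euclidean::'e topology) 0) (lvl_top (quot_space_top N) 0) (qm N :: ('e,'k) itr \<Rightarrow> _)"
    apply (rule continuous_compose_quotient_map[OF lvl0_quot])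
    unfolding e
    by (rule continuous_map_compose[OF quotient_imp_continuous_map[OF Q_quot] quotient_imp_continuous_map[OF lvl0_quot]])
  have o: "open_map (lvl_top (euclidean::'e topology) 0) (lvl_top (quot_space_top N) 0) (qm N :: ('e,'k) itr \<Rightarrow> _)"
    unfolding open_map_def
  proof (intro allI impI)
    fix U :: "('e,'k) itr set" assume U: "openin (lvl_top euclidean 0) U"
    then have U1: "U \<subseteq> range Base" "open (Base -` U)" by (auto simp: openin_quot_top)
    have UB: "U = Base ` (Base -` U)" using U1 by auto
    have "qm N ` (Base ` W) = Base ` (coset_of N ` W)" for W :: "'e set" by (simp add: image_image)
    then have "qm N ` U = Base ` (coset_of N ` (Base -` U))" using UB by metis
    moreover have "openin (quot_space_top N) (coset_of N ` (Base -` U))"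
      using Q_open U1 by (simp add: open_map_def)
    ultimately show "openin (lvl_top (quot_space_top N) 0) (qm N ` U)"
      using lvl0_open unfolding open_map_def by metis
  qed
  have "topspace (quot_space_top N) = range (coset_of N)"
    by (simp add: quot_space_top_def)
  then have s: "qm N ` topspace (lvl_top (euclidean::'e topology) 0 :: ('e,'k) itr topology) = topspace (lvl_top (quot_space_top N) 0)"
    by (simp add: image_image)
  show ?case using c o s by blast
next
  case (Suc j)
  let ?LE = "lvl_top (euclidean::'e topology) j :: ('e,'k) itr topology"
  let ?LQ = "lvl_top (quot_space_top N) j :: ('e set,'k) itr topology"
  let ?YE = "prod_topology ?LE (prod_topology ?LE (euclidean::'k topology))"
  let ?YQ = "prod_topology ?LQ (prod_topology ?LQ (euclidean::'k topology))"
  let ?P = "\<lambda>(x::('e,'k) itr, y::('e,'k) itr \<times> 'k). (qm N x, (\<lambda>(x::('e,'k) itr, y::'k). (qm N x, y)) y)"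
  have qj: "quotient_map ?LE ?LQ (qm N)" using Suc.IH continuous_open_imp_quotient_map by blast
  have oj: "open_map ?LE ?LQ (qm N)" using Suc.IH by blast
  have qi: "quotient_map (prod_topology ?LE euclidean) (prod_topology ?LQ (euclidean::'k topology)) (\<lambda>(x,y). (qm N x, y))"
    and oi: "open_map (prod_topology ?LE euclidean) (prod_topology ?LQ (euclidean::'k topology)) (\<lambda>(x,y). (qm N x, y))"
    using quot_prod[OF qj oj quot_ident open_map_ident] by auto
  have qP: "quotient_map ?YE ?YQ ?P" and oP: "open_map ?YE ?YQ ?P"
    using quot_prod[OF qj oj qi oi] by auto
  have e: "(qm N :: ('e,'k) itr \<Rightarrow> _) \<circ> (\<lambda>(a,b,t). Tri a b t) = (\<lambda>(a,b,t). Tri a b t) \<circ> ?P"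
    by (auto simp: fun_eq_iff)
  have eimg: "qm N ` ((\<lambda>(a,b,t). Tri a b t) ` W) = (\<lambda>(a,b,t). Tri a b t) ` (?P ` W)" for W
  proof -
    have "(qm N \<circ> (\<lambda>(a,b,t). Tri a b t)) ` W = ((\<lambda>(a,b,t). Tri a b t) \<circ> ?P) ` W"
      using arg_cong[where f="\<lambda>g. g ` W", OF e] .
    then show ?thesis by (simp only: image_comp)
  qed
  have c: "continuous_map (lvl_top (euclidean::'e topology) (Suc j)) (lvl_top (quot_space_top N) (Suc j)) (qm N :: ('e,'k) itr \<Rightarrow> _)"
    apply (rule continuous_compose_quotient_map[OF lvlS_quot])
    unfolding e
    by (rule continuous_map_compose[OF quotient_imp_continuous_map[OF qP] quotient_imp_continuous_map[OF lvlS_quot]])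
  have o: "open_map (lvl_top (euclidean::'e topology) (Suc j)) (lvl_top (quot_space_top N) (Suc j)) (qm N :: ('e,'k) itr \<Rightarrow> _)"
    unfolding open_map_def
  proof (intro allI impI)
    fix U :: "('e,'k) itr set" assume U: "openin (lvl_top euclidean (Suc j)) U"
    let ?W = "topspace ?YE \<inter> (\<lambda>(a,b,t). Tri a b t) -` U"
    have W: "openin ?YE ?W" and Usub: "U \<subseteq> (\<lambda>(a,b,t). Tri a b t) ` topspace ?YE"
      using U by (simp_all only: lvl_top.simps openin_quot_top)
    have Ueq: "U = (\<lambda>(a,b,t). Tri a b t) ` ?W" using img_pre[OF Usub] .
    have "qm N ` U = qm N ` ((\<lambda>(a,b,t). Tri a b t) ` ?W)" using Ueq by (rule arg_cong)
    also have "\<dots> = (\<lambda>(a,b,t). Tri a b t) ` (?P ` ?W)" by (rule eimg)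
    finally have "qm N ` U = (\<lambda>(a,b,t). Tri a b t) ` (?P ` ?W)" .
    moreover have "openin ?YQ (?P ` ?W)" using oP W by (simp add: open_map_def)
    ultimately show "openin (lvl_top (quot_space_top N) (Suc j)) (qm N ` U)"
      using lvlS_open unfolding open_map_def by metis
  qed
  have "qm N ` topspace (lvl_top (euclidean::'e topology) (Suc j) :: ('e,'k) itr topology)
      = qm N ` (\<lambda>(a,b,t). Tri a b t) ` topspace ?YE"
    using quotient_imp_surjective_map[OF lvlS_quot] by metis
  also have "\<dots> = (\<lambda>(a,b,t). Tri a b t) ` ?P ` topspace ?YE" by (rule eimg)
  also have "\<dots> = (\<lambda>(a,b,t). Tri a b t) ` topspace ?YQ" using quotient_imp_surjective_map[OF qP] by metis
  also have "\<dots> = topspace (lvl_top (quot_space_top N) (Suc j))"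
    using quotient_imp_surjective_map[OF lvlS_quot] by metis
  finally show ?case using c o by blast
qed

lemma topE: "topspace (lvl_top (euclidean::'e topology) 0 :: ('e,'k) itr topology) = range Base"
  by simp

lemma qm_add:
  "x \<in> topspace (lvl_top (euclidean::'e topology) j :: ('e,'k) itr topology) \<Longrightarrow>
   y \<in> topspace (lvl_top (euclidean::'e topology) j) \<Longrightarrow>
   qm N (itr_add (+) x y) = itr_add (quot_add N) (qm N x) (qm N y)"
proof (induction j arbitrary: x y)
  case 0 then show ?case by (auto simp: qadd)
next
  case (Suc j) then show ?case
    by (auto simp del: lvl_top.simps simp: mem_lvlS)
qed

lemma qm_scl: "qm N (itr_scl sE s x) = itr_scl (quot_scl sE N) s (qm N x)"
  by (induction x) (auto simp: qscl)

lemma add_top: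
  "x \<in> topspace (lvl_top (euclidean::'e topology) j :: ('e,'k) itr topology) \<Longrightarrow>
   y \<in> topspace (lvl_top (euclidean::'e topology) j) \<Longrightarrow>
   itr_add (+) x y \<in> topspace (lvl_top (euclidean::'e topology) j)"
proof (induction j arbitrary: x y)
  case 0 then show ?case by auto
next
  case (Suc j) then show ?case
    by (auto simp del: lvl_top.simps simp: mem_lvlS)
qed

lemma scl_top:
  "x \<in> topspace (lvl_top (euclidean::'e topology) j :: ('e,'k) itr topology) \<Longrightarrow>
   itr_scl sE s x \<in> topspace (lvl_top (euclidean::'e topology) j)"
proof (induction j arbitrary: x)
  case 0 then show ?case by auto
next
  case (Suc j) then show ?case
    by (auto simp del: lvl_top.simps simp: mem_lvlS)
qed

lemma e1:
  "x \<in> topspace (lvl_top (euclidean::'e topology) j :: ('e,'k) itr topology) \<Longrightarrow>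
   y \<in> topspace (lvl_top (euclidean::'e topology) j) \<Longrightarrow>
   itr_add (+) x (itr_scl sE 0 y) = x"
proof (induction j arbitrary: x y)
  case 0 then show ?case by auto
next
  case (Suc j) then show ?case
    by (auto simp del: lvl_top.simps simp: mem_lvlS)
qed

lemma e2:
  "t \<noteq> 0 \<Longrightarrow> x \<in> topspace (lvl_top (euclidean::'e topology) j :: ('e,'k) itr topology) \<Longrightarrow>
   z \<in> topspace (lvl_top (euclidean::'e topology) j) \<Longrightarrow>
   itr_add (+) x (itr_scl sE t (itr_scl sE (inverse t) (itr_add (+) z (itr_scl sE (-1) x)))) = z"
proof (induction j arbitrary: x z)
  case 0 then show ?case
    by (auto simp: E.scale_scale E.scale_right_distrib E.scale_minus_left)
next
  case (Suc j) then show ?case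
    by (auto simp del: lvl_top.simps simp: mem_lvlS field_simps)
qed

lemma e3:
  "t \<noteq> 0 \<Longrightarrow> x \<in> topspace (lvl_top (euclidean::'e topology) j :: ('e,'k) itr topology) \<Longrightarrow>
   y \<in> topspace (lvl_top (euclidean::'e topology) j) \<Longrightarrow>
   itr_scl sE (inverse t) (itr_add (+) (itr_add (+) x (itr_scl sE t y)) (itr_scl sE (-1) x)) = y"
proof (induction j arbitrary: x y)
  case 0 then show ?case
    by (auto simp: E.scale_scale E.scale_right_distrib E.scale_minus_left)
next
  case (Suc j) then show ?case
    by (auto simp del: lvl_top.simps simp: mem_lvlS field_simps)
qed


lemma qm_dom_aux:
  "a \<in> topspace (lvl_top (euclidean::'e topology) j :: ('e,'k) itr topology) \<Longrightarrow>
   c \<in> topspace (lvl_top (euclidean::'e topology) j) \<Longrightarrow>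
   qm N (itr_scl sE s (itr_add (+) c (itr_scl sE r a))) =
   itr_scl (quot_scl sE N) s (itr_add (quot_add N) (qm N c) (itr_scl (quot_scl sE N) r (qm N a)))"
  by (simp add: qm_scl qm_add scl_top)

lemma qm_dom:
  "qm N ` (iter_dom (euclidean::'e topology) (+) sE U j :: ('e,'k) itr set) =
   iter_dom (quot_space_top N) (quot_add N) (quot_scl sE N) (coset_of N ` U) j"
proof (induction j)
  case 0 then show ?case by (simp add: image_image)
next
  case (Suc j)
  let ?LE = "lvl_top (euclidean::'e topology) j :: ('e,'k) itr topology"
  let ?LQ = "lvl_top (quot_space_top N) j :: ('e set,'k) itr topology"
  let ?DE = "iter_dom (euclidean::'e topology) (+) sE U j :: ('e,'k) itr set"
  let ?DQ = "iter_dom (quot_space_top N) (quot_add N) (quot_scl sE N) (coset_of N ` U) j :: ('e set,'k) itr set"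
  have subE: "?DE \<subseteq> topspace ?LE" by (rule iter_dom_sub) simp
  have surj: "qm N ` topspace ?LE = topspace ?LQ" using qm_lvl by blast
  show ?case
  proof (intro set_eqI iffI)
    fix y assume "y \<in> qm N ` iter_dom (euclidean::'e topology) (+) sE U (Suc j)"
    then obtain a b t where abt: "y = qm N (Tri a b t)" "a \<in> ?DE" "b \<in> topspace ?LE"
      "itr_add (+) a (itr_scl sE t b) \<in> ?DE"
      by (auto simp: dq_dom_def)
    have "a \<in> topspace ?LE" using abt subE by blast
    then have "itr_add (quot_add N) (qm N a) (itr_scl (quot_scl sE N) t (qm N b)) = qm N (itr_add (+) a (itr_scl sE t b))"
      using abt by (simp add: qm_add qm_scl scl_top)
    then show "y \<in> iter_dom (quot_space_top N) (quot_add N) (quot_scl sE N) (coset_of N ` U) (Suc j)"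
      using abt Suc.IH surj by (auto simp: dq_dom_def)
  next
    fix y assume "y \<in> iter_dom (quot_space_top N) (quot_add N) (quot_scl sE N) (coset_of N ` U) (Suc j)"
    then obtain A B t where ABt: "y = Tri A B t" "A \<in> ?DQ" "B \<in> topspace ?LQ"
      "itr_add (quot_add N) A (itr_scl (quot_scl sE N) t B) \<in> ?DQ"
      by (auto simp: dq_dom_def)
    obtain a where a: "a \<in> ?DE" "qm N a = A" using ABt Suc.IH by (metis imageE)
    obtain b0 where b0: "b0 \<in> topspace ?LE" "qm N b0 = B" using ABt surj by (metis imageE)
    obtain c where c: "c \<in> ?DE" "qm N c = itr_add (quot_add N) A (itr_scl (quot_scl sE N) t B)"
      using ABt Suc.IH by (metis imageE)
    have at: "a \<in> topspace ?LE" and ct: "c \<in> topspace ?LE" using a c subE by auto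
    show "y \<in> qm N ` iter_dom (euclidean::'e topology) (+) sE U (Suc j)"
    proof (cases "t = 0")
      case True
      have "Tri a b0 t \<in> iter_dom (euclidean::'e topology) (+) sE U (Suc j)"
        using True a b0 e1[OF at b0(1)] by (auto simp: dq_dom_def)
      moreover have "qm N (Tri a b0 t) = y" using ABt a b0 by simp
      ultimately show ?thesis by blast
    next
      case False
      define b where "b = itr_scl sE (inverse t) (itr_add (+) c (itr_scl sE (-1) a))"
      have bt: "b \<in> topspace ?LE" unfolding b_def by (intro scl_top add_top ct at)
      have "itr_add (+) a (itr_scl sE t b) = c" unfolding b_def by (rule e2[OF False at ct])
      then have dom: "Tri a b t \<in> iter_dom (euclidean::'e topology) (+) sE U (Suc j)"
        using a bt c by (auto simp: dq_dom_def)
      let ?c' = "itr_add (+) a (itr_scl sE t b0)"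
      have c't: "?c' \<in> topspace ?LE" by (intro add_top scl_top at b0)
      have "qm N ?c' = qm N c" using c a b0 at by (simp add: qm_add qm_scl scl_top)
      then have "qm N b = qm N (itr_scl sE (inverse t) (itr_add (+) ?c' (itr_scl sE (-1) a)))"
        unfolding b_def using qm_dom_aux[OF at ct] qm_dom_aux[OF at c't] by simp
      also have "\<dots> = qm N b0" using e3[OF False at b0(1)] by simp
      finally have "qm N (Tri a b t) = y" using ABt a b0 by simp
      with dom show ?thesis by blast
    qed
  qed
qed


lemma dir1:
  fixes sF :: "'k \<Rightarrow> 'f::{ab_group_add,t2_space} \<Rightarrow> 'f"
  assumes "Ck_nat (quot_space_top N) (quot_add N) (quot_scl sE N) sF (coset_of N ` U) f1 n"
  shows "Ck_nat (euclidean::'e topology) (+) sE sF U (\<lambda>x. f1 (coset_of N x)) n"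
proof -
  obtain h1 :: "nat \<Rightarrow> ('e set,'k) itr \<Rightarrow> 'f" where
    h1b: "\<forall>x\<in>coset_of N ` U. h1 0 (Base x) = f1 x" and
    h1c: "\<forall>j\<le>n. continuous_map (subtopology (lvl_top (quot_space_top N) j)
        (iter_dom (quot_space_top N) (quot_add N) (quot_scl sE N) (coset_of N ` U) j)) euclidean (h1 j)" and
    h1d: "\<forall>j<n. \<forall>a b t. Tri a b t \<in> iter_dom (quot_space_top N) (quot_add N) (quot_scl sE N) (coset_of N ` U) (Suc j) \<longrightarrow>
           h1 j (itr_add (quot_add N) a (itr_scl (quot_scl sE N) t b)) - h1 j a = sF t (h1 (Suc j) (Tri a b t))"
    using assms unfolding Ck_nat_def by blast
  define h :: "nat \<Rightarrow> ('e,'k) itr \<Rightarrow> 'f" where "h j a = h1 j (qm N a)" for j a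
  show ?thesis unfolding Ck_nat_def
  proof (intro exI[of _ h] conjI allI impI ballI)
    fix x assume "x \<in> U" then show "h 0 (Base x) = f1 (coset_of N x)" using h1b by (simp add: h_def)
  next
    fix j assume j: "j \<le> n"
    have cq: "continuous_map (subtopology (lvl_top (euclidean::'e topology) j) (iter_dom euclidean (+) sE U j))
       (subtopology (lvl_top (quot_space_top N) j) (iter_dom (quot_space_top N) (quot_add N) (quot_scl sE N) (coset_of N ` U) j))
       (qm N :: ('e,'k) itr \<Rightarrow> _)"
      apply (rule continuous_map_into_subtopology)
       apply (rule continuous_map_from_subtopology)
       apply (rule conjunct1[OF qm_lvl])
      using qm_dom by auto
    have "h j = h1 j \<circ> qm N" by (auto simp: h_def fun_eq_iff)
    then show "continuous_map (subtopology (lvl_top euclidean j) (iter_dom euclidean (+) sE U j)) euclidean (h j)"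
      using continuous_map_compose[OF cq] h1c j by auto
  next
    fix j a b t assume j: "j < n" and T: "Tri a b t \<in> iter_dom (euclidean::'e topology) (+) sE U (Suc j)"
    then have ab: "a \<in> topspace (lvl_top (euclidean::'e topology) j)" "b \<in> topspace (lvl_top (euclidean::'e topology) j)"
      using iter_dom_sub[of U "euclidean::'e topology" "(+)" sE j]
      by (auto simp: dq_dom_def)
    have "qm N (Tri a b t) \<in> iter_dom (quot_space_top N) (quot_add N) (quot_scl sE N) (coset_of N ` U) (Suc j)"
      using qm_dom T by blast
    then have "h1 j (itr_add (quot_add N) (qm N a) (itr_scl (quot_scl sE N) t (qm N b))) - h1 j (qm N a)
        = sF t (h1 (Suc j) (Tri (qm N a) (qm N b) t))"
      using h1d j by simp
    moreover have "qm N (itr_add (+) a (itr_scl sE t b)) = itr_add (quot_add N) (qm N a) (itr_scl (quot_scl sE N) t (qm N b))"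
      using ab by (simp add: qm_add qm_scl scl_top)
    ultimately show "h j (itr_add (+) a (itr_scl sE t b)) - h j a = sF t (h (Suc j) (Tri a b t))"
      by (simp add: h_def)
  qed
qed


lemma dir2:
  fixes sF :: "'k \<Rightarrow> 'f::{ab_group_add,t2_space} \<Rightarrow> 'f"
  assumes tf: "top_field TYPE('k)" and nd: "non_discrete TYPE('k)" and tvsF: "tvs sF"
    and U: "open U"
    and C: "Ck_nat (euclidean::'e topology) (+) sE sF U (\<lambda>x. f1 (coset_of N x)) n"
  shows "Ck_nat (quot_space_top N) (quot_add N) (quot_scl sE N) sF (coset_of N ` U) f1 n"
proof -
  interpret F: vector_space sF using tvsF tvs_def by blast
  have kadd: "continuous_map (prod_topology euclidean euclidean) (euclidean::'k topology) (\<lambda>(x,y). x + y)"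
   and kmul: "continuous_map (prod_topology euclidean euclidean) (euclidean::'k topology) (\<lambda>(x,y). x * y)"
    using tf unfolding top_field_def by (simp_all add: case_prod_unfold)
  let ?DE = "\<lambda>j. iter_dom (euclidean::'e topology) (+) sE U j :: ('e,'k) itr set"
  let ?DQ = "\<lambda>j. iter_dom (quot_space_top N) (quot_add N) (quot_scl sE N) (coset_of N ` U) j :: ('e set,'k) itr set"
  let ?LE = "\<lambda>j. lvl_top (euclidean::'e topology) j :: ('e,'k) itr topology"
  let ?LQ = "\<lambda>j. lvl_top (quot_space_top N) j :: ('e set,'k) itr topology"
  obtain h :: "nat \<Rightarrow> ('e,'k) itr \<Rightarrow> 'f" where
    hb: "\<forall>x\<in>U. h 0 (Base x) = f1 (coset_of N x)" and
    hc: "\<forall>j\<le>n. continuous_map (subtopology (?LE j) (?DE j)) euclidean (h j)" and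
    hd: "\<forall>j<n. \<forall>a b t. Tri a b t \<in> ?DE (Suc j) \<longrightarrow>
           h j (itr_add (+) a (itr_scl sE t b)) - h j a = sF t (h (Suc j) (Tri a b t))"
    using C unfolding Ck_nat_def by blast
  have subE: "?DE j \<subseteq> topspace (?LE j)" for j by (rule iter_dom_sub) simp
  have openE: "openin (?LE j) (?DE j)" for j
    by (rule iter_dom_open[OF addc kadd sclc kmul]) (simp add: U)
  have memS: "a \<in> ?DE j \<and> b \<in> topspace (?LE j) \<and> itr_add (+) a (itr_scl sE t b) \<in> ?DE j"
    if "Tri a b t \<in> ?DE (Suc j)" for a b t j
    using that by (auto simp: dq_dom_def)
  have wd: "\<forall>a a'. a \<in> ?DE j \<longrightarrow> a' \<in> ?DE j \<longrightarrow> qm N a = qm N a' \<longrightarrow> h j a = h j a'" if "j \<le> n" for j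
    using that
  proof (induction j)
    case 0
    show ?case
    proof (intro allI impI)
      fix a a' assume a: "a \<in> ?DE 0" and a': "a' \<in> ?DE 0" and q: "qm N a = qm N a'"
      obtain x where x: "x \<in> U" "a = Base x" using a by auto
      obtain x' where x': "x' \<in> U" "a' = Base x'" using a' by auto
      have "coset_of N x = coset_of N x'" using q x x' by simp
      then show "h 0 a = h 0 a'" using hb x x' by simp
    qed
  next
    case (Suc j)
    have IH: "\<And>a a'. a \<in> ?DE j \<Longrightarrow> a' \<in> ?DE j \<Longrightarrow> qm N a = qm N a' \<Longrightarrow> h j a = h j a'"
    proof -
      have "j \<le> n" using Suc.prems by simp
      from Suc.IH[OF this] show "\<And>a a'. a \<in> ?DE j \<Longrightarrow> a' \<in> ?DE j \<Longrightarrow> qm N a = qm N a' \<Longrightarrow> h j a = h j a'"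
        by blast
    qed
    have nz: "h (Suc j) (Tri a b s) = h (Suc j) (Tri a' b' s)"
      if s: "s \<noteq> 0" and T: "Tri a b s \<in> ?DE (Suc j)" and T': "Tri a' b' s \<in> ?DE (Suc j)"
        and qa: "qm N a = qm N a'" and qb: "qm N b = qm N b'" for a b a' b' s
    proof -
      note m = memS[OF T] and m' = memS[OF T']
      have at: "a \<in> topspace (?LE j)" "a' \<in> topspace (?LE j)" using m m' subE by auto
      have "qm N (itr_add (+) a (itr_scl sE s b)) = qm N (itr_add (+) a' (itr_scl sE s b'))"
        using at m m' qa qb by (simp add: qm_add qm_scl scl_top)
      then have "h j (itr_add (+) a (itr_scl sE s b)) = h j (itr_add (+) a' (itr_scl sE s b'))"
        using IH m m' by blast
      moreover have "h j a = h j a'" using IH m m' qa by blast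
      ultimately have "sF s (h (Suc j) (Tri a b s)) = sF s (h (Suc j) (Tri a' b' s))"
        using hd Suc.prems T T' by (metis Suc_le_lessD)
      then show ?thesis using s by simp
    qed
    have lim: "((\<lambda>s. h (Suc j) (Tri a b s)) \<longlongrightarrow> h (Suc j) (Tri a b 0)) (at 0)
       \<and> open {s. Tri a b s \<in> ?DE (Suc j)}"
      if T: "Tri a b 0 \<in> ?DE (Suc j)" for a b
    proof -
      note m = memS[OF T]
      have ab: "a \<in> topspace (?LE j)" "b \<in> topspace (?LE j)" using m subE by auto
      have g: "continuous_map euclidean (?LE (Suc j)) (\<lambda>s::'k. Tri a b s)"
      proof -
        have "continuous_map euclidean (prod_topology (?LE j) (prod_topology (?LE j) euclidean)) (\<lambda>s::'k. (a, b, s))"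
          using ab by (intro continuous_map_pairedI cm_idl) auto
        from continuous_map_compose[OF this quotient_imp_continuous_map[OF lvlS_quot]]
        show ?thesis by (simp add: o_def)
      qed
      let ?S = "{s. Tri a b s \<in> ?DE (Suc j)}"
      have So: "open ?S"
        using openin_continuous_map_preimage[OF g openE[of "Suc j"]] by simp
      have "continuous_map (subtopology euclidean ?S) (subtopology (?LE (Suc j)) (?DE (Suc j))) (\<lambda>s::'k. Tri a b s)"
        by (rule continuous_map_into_subtopology[OF continuous_map_from_subtopology[OF g]]) auto
      from continuous_map_compose[OF this hc[rule_format, OF Suc.prems]]
      have "continuous_on ?S (\<lambda>s. h (Suc j) (Tri a b s))" by (simp add: o_def)
      then have "isCont (\<lambda>s. h (Suc j) (Tri a b s)) 0"
        using So T continuous_on_eq_continuous_at by blast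
      then show ?thesis using So by (simp add: isCont_def)
    qed
    show ?case
    proof (intro allI impI)
      fix x x' assume x: "x \<in> ?DE (Suc j)" and x': "x' \<in> ?DE (Suc j)" and q: "qm N x = qm N x'"
      obtain a b t where xe: "x = Tri a b t" using x by (auto simp: dq_dom_def)
      obtain a' b' t' where xe': "x' = Tri a' b' t'" using x' by (auto simp: dq_dom_def)
      have tt: "t' = t" and qa: "qm N a = qm N a'" and qb: "qm N b = qm N b'" using q xe xe' by auto
      show "h (Suc j) x = h (Suc j) x'"
      proof (cases "t = 0")
        case False
        then show ?thesis using nz x x' xe xe' tt qa qb by blast
      next
        case True
        have T: "Tri a b 0 \<in> ?DE (Suc j)" and T': "Tri a' b' 0 \<in> ?DE (Suc j)"
          using x x' xe xe' tt True by auto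
        note l = lim[OF T] and l' = lim[OF T']
        have ev: "eventually (\<lambda>s. h (Suc j) (Tri a b s) = h (Suc j) (Tri a' b' s)) (at (0::'k))"
          unfolding eventually_at_topological
        proof (intro exI conjI ballI impI)
          show "open ({s. Tri a b s \<in> ?DE (Suc j)} \<inter> {s. Tri a' b' s \<in> ?DE (Suc j)})"
            using l l' by blast
          show "(0::'k) \<in> {s. Tri a b s \<in> ?DE (Suc j)} \<inter> {s. Tri a' b' s \<in> ?DE (Suc j)}"
            using T T' by blast
          fix s :: 'k assume "s \<in> {s. Tri a b s \<in> ?DE (Suc j)} \<inter> {s. Tri a' b' s \<in> ?DE (Suc j)}" "s \<noteq> 0"
          then show "h (Suc j) (Tri a b s) = h (Suc j) (Tri a' b' s)" using nz qa qb by blast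
        qed
        have "((\<lambda>s. h (Suc j) (Tri a' b' s)) \<longlongrightarrow> h (Suc j) (Tri a b 0)) (at 0)"
          using Lim_transform_eventually[OF conjunct1[OF l] ev] .
        then have "h (Suc j) (Tri a b 0) = h (Suc j) (Tri a' b' 0)"
          using tendsto_unique[OF nd_at[OF tf nd]] conjunct1[OF l'] by blast
        then show ?thesis using xe xe' tt True by simp
      qed
    qed
  qed
  define h1 :: "nat \<Rightarrow> ('e set,'k) itr \<Rightarrow> 'f" where
    "h1 j A = h j (SOME a. a \<in> ?DE j \<and> qm N a = A)" for j A
  have h1qm: "h1 j (qm N a) = h j a" if "j \<le> n" "a \<in> ?DE j" for j a
  proof -
    have "\<exists>a'. a' \<in> ?DE j \<and> qm N a' = qm N a" using that by blast
    then have "(SOME a'. a' \<in> ?DE j \<and> qm N a' = qm N a) \<in> ?DE j \<and> qm N (SOME a'. a' \<in> ?DE j \<and> qm N a' = qm N a) = qm N a"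
      by (rule someI_ex)
    then show ?thesis unfolding h1_def using wd[OF that(1)] that(2) by metis
  qed
  show ?thesis unfolding Ck_nat_def
  proof (intro exI[of _ h1] conjI allI impI ballI)
    fix X assume "X \<in> coset_of N ` U"
    then obtain x where x: "x \<in> U" "X = coset_of N x" by auto
    then have "Base x \<in> ?DE 0" by simp
    then show "h1 0 (Base X) = f1 X" using h1qm[of 0 "Base x"] hb x by simp
  next
    fix j assume j: "j \<le> n"
    show "continuous_map (subtopology (?LQ j) (?DQ j)) euclidean (h1 j)"
      unfolding continuous_map_def
    proof (intro conjI allI impI)
      show "h1 j \<in> topspace (subtopology (?LQ j) (?DQ j)) \<rightarrow> topspace euclidean" by simp
      fix W :: "'f set" assume W: "openin euclidean W"
      let ?R = "{a \<in> topspace (subtopology (?LE j) (?DE j)). h j a \<in> W}"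
      have "openin (subtopology (?LE j) (?DE j)) ?R"
        using openin_continuous_map_preimage[OF hc[rule_format, OF j] W] .
      then have "openin (?LE j) ?R" using openin_open_subtopology[OF openE] by blast
      then have Ro: "openin (?LQ j) (qm N ` ?R)" using qm_lvl unfolding open_map_def by blast
      have qsub: "qm N ` topspace (?LE j) \<subseteq> topspace (?LQ j)" using qm_lvl by blast
      have eq: "{A \<in> topspace (subtopology (?LQ j) (?DQ j)). h1 j A \<in> W} = qm N ` ?R"
      proof (intro set_eqI iffI)
        fix A assume A: "A \<in> {A \<in> topspace (subtopology (?LQ j) (?DQ j)). h1 j A \<in> W}"
        then have "A \<in> qm N ` ?DE j" using qm_dom by auto
        then obtain a where "a \<in> ?DE j" "A = qm N a" by (rule imageE) simp
        then show "A \<in> qm N ` ?R" using A h1qm[OF j] subE by auto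
      next
        fix A assume "A \<in> qm N ` ?R"
        then obtain a where a: "a \<in> ?DE j" "a \<in> topspace (?LE j)" "h j a \<in> W" "A = qm N a" by auto
        then show "A \<in> {A \<in> topspace (subtopology (?LQ j) (?DQ j)). h1 j A \<in> W}"
        proof -
          have "qm N a \<in> qm N ` ?DE j" using a by blast
          then have "A \<in> ?DQ j" using a qm_dom by simp
          moreover have "A \<in> topspace (?LQ j)" using a qsub by blast
          ultimately show ?thesis using a h1qm[OF j] by simp
        qed
      qed
      have "qm N ` ?R \<subseteq> ?DQ j" using qm_dom by auto
      then have "qm N ` ?R = qm N ` ?R \<inter> ?DQ j" by blast
      then show "openin (subtopology (?LQ j) (?DQ j)) {A \<in> topspace (subtopology (?LQ j) (?DQ j)). h1 j A \<in> W}"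
        unfolding eq openin_subtopology using Ro by blast
    qed
  next
    fix j A B t assume j: "j < n" and T: "Tri A B t \<in> ?DQ (Suc j)"
    then obtain x where x: "x \<in> ?DE (Suc j)" "qm N x = Tri A B t" using qm_dom by (metis imageE)
    then obtain a b where xe: "x = Tri a b t" "qm N a = A" "qm N b = B" by (auto simp: dq_dom_def)
    note m = memS[OF x(1)[unfolded xe(1)]]
    have at: "a \<in> topspace (?LE j)" using m subE by auto
    have "itr_add (quot_add N) A (itr_scl (quot_scl sE N) t B) = qm N (itr_add (+) a (itr_scl sE t b))"
      using at m xe by (simp add: qm_add qm_scl scl_top)
    moreover have jn: "j \<le> n" "Suc j \<le> n" using j by simp_all
    ultimately have "h1 j (itr_add (quot_add N) A (itr_scl (quot_scl sE N) t B)) - h1 j A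
        = h j (itr_add (+) a (itr_scl sE t b)) - h j a"
      using h1qm[OF jn(1)] m xe by metis
    also have "\<dots> = sF t (h (Suc j) (Tri a b t))" using hd j x xe by blast
    also have "\<dots> = sF t (h1 (Suc j) (Tri A B t))"
      using h1qm[OF jn(2) x(1)] x xe by simp
    finally show "h1 j (itr_add (quot_add N) A (itr_scl (quot_scl sE N) t B)) - h1 j A = sF t (h1 (Suc j) (Tri A B t))" .
  qed
qed


end


theorem lemma10p4:
  fixes sE :: "'k::{field,t2_space} \<Rightarrow> 'e::{ab_group_add,t2_space} \<Rightarrow> 'e"
    and sF :: "'k \<Rightarrow> 'f::{ab_group_add,t2_space} \<Rightarrow> 'f"
    and N :: "'e set" and k :: enat
    and f1 :: "'e set \<Rightarrow> 'f" and U1 :: "'e set set" and U :: "'e set"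
  assumes "top_field TYPE('k)" and "non_discrete TYPE('k)"
    and "tvs sE" and "tvs sF"
    and "module.subspace sE N" and "closed N"
    and "openin (quot_space_top N) U1"
    and "open U" and "coset_of N ` U = U1"
  shows "Ck (quot_space_top N) (quot_add N) (quot_scl sE N) sF U1 f1 k \<longleftrightarrow>
         Ck (euclidean :: 'e topology) (+) sE sF U (\<lambda>x. f1 (coset_of N x)) k"
proof -
  have "Ck_nat (quot_space_top N) (quot_add N) (quot_scl sE N) sF U1 f1 n \<longleftrightarrow>
        Ck_nat (euclidean :: 'e topology) (+) sE sF U (\<lambda>x. f1 (coset_of N x)) n" for n
    using dir1[OF assms(3) assms(5), of sF U f1 n] dir2[OF assms(3) assms(5) assms(1,2,4,8), of f1 n]
    unfolding assms(9) by blast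
  then show ?thesis unfolding Ck_def by simp
qed

end
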